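(* Let $p_1,\dots,p_n$ be non-negative integers and $q_1,\dots,q_n$ positive integers with $q_1+\dots+q_n\equiv 0\pmod 2$, and let $W=H(q_1,p_1)\times\dots\times H(q_n,p_n)$ with Lie algebra $\mathfrak w$. Then $\dim\mathfrak w=\sum_i(2q_ip_i+q_i)$ is even, $\dim[\mathfrak w,\mathfrak w]=\sum_{i}q_ip_i$, and $\dim\mathfrak w\ge 2\dim[\mathfrak w,\mathfrak w]+2$; consequently $W$ is a Lie group of type $T$.
   Context: $H(q,p)$ is the group of real block matrices $\begin{pmatrix} I_p & A & B\\ 0 & I_q & C\\ 0&0&I_q\end{pmatrix}$ with $A,B$ arbitrary real $p\times q$ matrices and $C$ a diagonal real $q\times q$ matrix. A Lie group is of type $T$ if every left-invariant almost complex structure on it has nonzero holomorphic type, where holomorphic type is defined as follows: a smooth complex function $f$ is holomorphic if $df$ is of type $(1,0)$ w.r.t. $J$; $m(x)$ is the maximal number of local holomorphic functions near $x$ with linearly independent differentials at $x$; $J$ has holomorphic type $m$ if $m(x)=m$ for all $x$. Known fact that may be used: every $2N$-dimensional Lie group whose Lie algebra has commutator ideal of dimension less than $N$ is of type $T$. *)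

theory Defs
  imports "HOL-Analysis.Analysis"
begin

text \<open>Finite matrices with variable size are first written as functions
  nat => nat => real (entries outside the relevant index range are irrelevant/zero).\<close>

text \<open>The block matrix (I_p, A, B; 0, I_q, C; 0, 0, I_q) of size p+2q.
  A, B are p x q, C is q x q (required to be diagonal in H_params).\<close>
definition Hmat :: "nat \<Rightarrow> nat \<Rightarrow> (nat \<Rightarrow> nat \<Rightarrow> real) \<Rightarrow> (nat \<Rightarrow> nat \<Rightarrow> real)
                    \<Rightarrow> (nat \<Rightarrow> nat \<Rightarrow> real) \<Rightarrow> nat \<Rightarrow> nat \<Rightarrow> real" where
  "Hmat q p A B C r c =
     (if r = c \<and> r < p + 2*q then 1
      else if r < p \<and> p \<le> c \<and> c < p + q then A r (c - p)
      else if r < p \<and> p + q \<le> c \<and> c < p + 2*q then B r (c - p - q)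
      else if p \<le> r \<and> r < p + q \<and> p + q \<le> c \<and> c < p + 2*q then C (r - p) (c - p - q)
      else 0)"

definition diag_mat :: "nat \<Rightarrow> (nat \<Rightarrow> nat \<Rightarrow> real) \<Rightarrow> bool" where
  "diag_mat q C \<longleftrightarrow> (\<forall>j<q. \<forall>k<q. j \<noteq> k \<longrightarrow> C j k = 0)"

definition bsize :: "(nat \<Rightarrow> nat) \<Rightarrow> (nat \<Rightarrow> nat) \<Rightarrow> nat \<Rightarrow> nat" where
  "bsize p q i = p i + 2 * q i"

definition boff :: "(nat \<Rightarrow> nat) \<Rightarrow> (nat \<Rightarrow> nat) \<Rightarrow> nat \<Rightarrow> nat" where
  "boff p q i = (\<Sum>j<i. bsize p q j)"

definition Nsize :: "nat \<Rightarrow> (nat \<Rightarrow> nat) \<Rightarrow> (nat \<Rightarrow> nat) \<Rightarrow> nat" where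
  "Nsize n p q = (\<Sum>i<n. bsize p q i)"

definition blockdiag :: "nat \<Rightarrow> (nat \<Rightarrow> nat) \<Rightarrow> (nat \<Rightarrow> nat)
    \<Rightarrow> (nat \<Rightarrow> nat \<Rightarrow> nat \<Rightarrow> real) \<Rightarrow> nat \<Rightarrow> nat \<Rightarrow> real" where
  "blockdiag n p q Hs r c =
     (\<Sum>i<n. if boff p q i \<le> r \<and> r < boff p q i + bsize p q i
               \<and> boff p q i \<le> c \<and> c < boff p q i + bsize p q i
            then Hs i (r - boff p q i) (c - boff p q i) else 0)"

definition W_nat :: "nat \<Rightarrow> (nat \<Rightarrow> nat) \<Rightarrow> (nat \<Rightarrow> nat) \<Rightarrow> (nat \<Rightarrow> nat \<Rightarrow> real) set" where
  "W_nat n p q = {blockdiag n p q (\<lambda>i. Hmat (q i) (p i) (A i) (B i) (C i)) | A B C.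
                    \<forall>i<n. diag_mat (q i) (C i)}"

text \<open>Transfer to genuine N x N real matrices (type real^'N^'N), where the
  index type 'N is identified with {0..<N} via a bijection e.\<close>
definition to_mat :: "nat \<Rightarrow> (nat \<Rightarrow> 'N::finite) \<Rightarrow> (nat \<Rightarrow> nat \<Rightarrow> real) \<Rightarrow> real^'N^'N" where
  "to_mat N e M = (\<chi> a b. M (the_inv_into {0..<N} e a) (the_inv_into {0..<N} e b))"

definition Wgrp :: "nat \<Rightarrow> (nat \<Rightarrow> nat) \<Rightarrow> (nat \<Rightarrow> nat) \<Rightarrow> (nat \<Rightarrow> 'N::finite) \<Rightarrow> (real^'N^'N) set" where
  "Wgrp n p q e = to_mat (Nsize n p q) e ` W_nat n p q"

definition lie_alg :: "(real^'N^'N) set \<Rightarrow> (real^'N^'N) set" where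
  "lie_alg G = {X. \<exists>\<gamma>. (\<forall>t. \<gamma> t \<in> G) \<and> \<gamma> 0 = mat 1 \<and> (\<gamma> has_vector_derivative X) (at 0)}"

definition commutator_ideal :: "(real^'N^'N) set \<Rightarrow> (real^'N^'N) set" where
  "commutator_ideal L = span {X ** Y - Y ** X | X Y. X \<in> L \<and> Y \<in> L}"

text \<open>Existence and continuity of all iterated directional derivatives on an open set
  (for open subsets of a finite-dimensional space this is C^infinity).\<close>
primrec iter_diff :: "'a::real_normed_vector set \<Rightarrow> ('a \<Rightarrow> complex) \<Rightarrow> 'a list \<Rightarrow> bool" where
  "iter_diff U F [] = continuous_on U F"
| "iter_diff U F (v # vs) =
     (\<exists>G. (\<forall>x\<in>U. ((\<lambda>t. F (x + t *\<^sub>R v)) has_vector_derivative G x) (at 0)) \<and> iter_diff U G vs)"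

definition smooth_on :: "'a::real_normed_vector set \<Rightarrow> ('a \<Rightarrow> complex) \<Rightarrow> bool" where
  "smooth_on U F \<longleftrightarrow> (\<forall>vs. iter_diff U F vs)"

definition dd :: "('a::real_normed_vector \<Rightarrow> complex) \<Rightarrow> 'a \<Rightarrow> 'a \<Rightarrow> complex" where
  "dd F x w = vector_derivative (\<lambda>t. F (x + t *\<^sub>R w)) (at 0)"

text \<open>Left-invariant almost complex structure on the matrix Lie group G: a linear
  endomorphism J of the Lie algebra with J^2 = -1; at g it acts by J_g(g X) = g (J X).\<close>
definition left_inv_acs :: "(real^'N^'N) set \<Rightarrow> (real^'N^'N \<Rightarrow> real^'N^'N) \<Rightarrow> bool" where
  "left_inv_acs G J \<longleftrightarrow>
     (\<forall>X\<in>lie_alg G. J X \<in> lie_alg G \<and> J (J X) = - X) \<and>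
     (\<forall>X\<in>lie_alg G. \<forall>Y\<in>lie_alg G. J (X + Y) = J X + J Y) \<and>
     (\<forall>X\<in>lie_alg G. \<forall>a. J (a *\<^sub>R X) = a *\<^sub>R J X)"

text \<open>There are k local holomorphic functions near x (smooth functions on a
  neighbourhood of x in G, given as restrictions of smooth functions on an ambient open
  set U) whose differentials at x are complex-linearly independent. Holomorphic means
  df is of type (1,0): df(J_y w) = i df(w) for tangent vectors w = y X at y.\<close>
definition hol_indep :: "(real^'N^'N) set \<Rightarrow> (real^'N^'N \<Rightarrow> real^'N^'N) \<Rightarrow> real^'N^'N \<Rightarrow> nat \<Rightarrow> bool" where
  "hol_indep G J x k \<longleftrightarrow>
     (\<exists>U F. open U \<and> x \<in> U \<and>
        (\<forall>i<k. smooth_on U (F i) \<and>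
               (\<forall>y\<in>U \<inter> G. \<forall>X\<in>lie_alg G. dd (F i) y (y ** J X) = \<i> * dd (F i) y (y ** X))) \<and>
        (\<forall>c::nat \<Rightarrow> complex. (\<forall>X\<in>lie_alg G. (\<Sum>i<k. c i * dd (F i) x (x ** X)) = 0)
                \<longrightarrow> (\<forall>i<k. c i = 0)))"

definition has_hol_type :: "(real^'N^'N) set \<Rightarrow> (real^'N^'N \<Rightarrow> real^'N^'N) \<Rightarrow> nat \<Rightarrow> bool" where
  "has_hol_type G J m \<longleftrightarrow> (\<forall>x\<in>G. hol_indep G J x m \<and> (\<forall>k. hol_indep G J x k \<longrightarrow> k \<le> m))"

definition type_T :: "(real^'N^'N) set \<Rightarrow> bool" where
  "type_T G \<longleftrightarrow> (\<forall>J. left_inv_acs G J \<longrightarrow> (\<exists>m. m \<noteq> 0 \<and> has_hol_type G J m))"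

end

theory Submission
  imports Defs
begin


lemma iter_diff_const: "iter_diff U (\<lambda>_. c) vs"
proof (induction vs arbitrary: c)
  case Nil then show ?case by (simp add: continuous_on_const)
next
  case (Cons v vs)
  show ?case by (auto intro!: exI[of _ "\<lambda>_. 0"] Cons)
qed

lemma smooth_linear:
  fixes F :: "'a::euclidean_space \<Rightarrow> complex"
  assumes "linear F" shows "smooth_on U F"
  unfolding smooth_on_def
proof
  fix vs show "iter_diff U F vs"
  proof (cases vs)
    case Nil then show ?thesis
      using assms by (simp add: linear_continuous_on linear_conv_bounded_linear)
  next
    case (Cons v ws)
    have "((\<lambda>t. F (x + t *\<^sub>R v)) has_vector_derivative F v) (at 0)" for x
    proof -
      have "(\<lambda>t. F (x + t *\<^sub>R v)) = (\<lambda>t. F x + t *\<^sub>R F v)"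
        using assms by (simp add: linear_add linear_scale)
      moreover have "((\<lambda>t. F x + t *\<^sub>R F v) has_vector_derivative F v) (at 0)"
        by (auto intro!: derivative_eq_intros)
      ultimately show ?thesis by simp
    qed
    then show ?thesis using Cons by (auto intro!: exI[of _ "\<lambda>_. F v"] iter_diff_const)
  qed
qed

lemma dd_linear:
  fixes F :: "'a::euclidean_space \<Rightarrow> complex"
  assumes "linear F" shows "dd F y w = F w"
proof -
  have "(\<lambda>t. F (y + t *\<^sub>R w)) = (\<lambda>t. F y + t *\<^sub>R F w)"
    using assms by (simp add: linear_add linear_scale)
  moreover have "((\<lambda>t. F y + t *\<^sub>R F w) has_vector_derivative F w) (at 0)"
    by (auto intro!: derivative_eq_intros)
  ultimately show ?thesis unfolding dd_def by (simp add: vector_derivative_at)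
qed

lemma iter_diff_comp:
  fixes L :: "'a::euclidean_space \<Rightarrow> 'b::euclidean_space"
  assumes "linear L"
  shows "iter_diff U F (map L vs) \<Longrightarrow> iter_diff (L -` U) (\<lambda>y. F (L y)) vs"
proof (induction vs arbitrary: F)
  case Nil
  have cL: "continuous_on (L -` U) L"
    using assms by (simp add: linear_continuous_on linear_conv_bounded_linear)
  from Nil have "continuous_on U F" by simp
  then have "continuous_on (L -` U) (F \<circ> L)"
    using continuous_on_compose[OF cL, of F] continuous_on_subset[of U F "L ` (L -` U)"]
    by (metis image_vimage_subset)
  then show ?case by (simp add: o_def)
next
  case (Cons v vs)
  then obtain G where G: "\<forall>x\<in>U. ((\<lambda>t. F (x + t *\<^sub>R L v)) has_vector_derivative G x) (at 0)"
    and "iter_diff U G (map L vs)" by auto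
  then have "iter_diff (L -` U) (\<lambda>y. G (L y)) vs" using Cons.IH by blast
  moreover have "\<forall>x\<in>L -` U. ((\<lambda>t. F (L (x + t *\<^sub>R v))) has_vector_derivative G (L x)) (at 0)"
    using G assms by (simp add: linear_add linear_scale)
  ultimately show ?case unfolding iter_diff.simps by (intro exI[of _ "\<lambda>y. G (L y)"] conjI) blast+
qed

lemma smooth_comp:
  fixes L :: "'a::euclidean_space \<Rightarrow> 'b::euclidean_space"
  assumes "linear L" "smooth_on U F" shows "smooth_on (L -` U) (\<lambda>y. F (L y))"
  using assms iter_diff_comp unfolding smooth_on_def by blast

lemma dd_comp:
  assumes "linear L" shows "dd (\<lambda>y. F (L y)) x w = dd F (L x) (L w)"
  using assms unfolding dd_def by (simp add: linear_add linear_scale)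



lemma smooth_dir:
  assumes "smooth_on U F"
  obtains G where "\<And>y. y \<in> U \<Longrightarrow> ((\<lambda>t. F (y + t *\<^sub>R v)) has_vector_derivative G y) (at 0)"
    and "continuous_on U G"
proof -
  from assms have "iter_diff U F [v]" unfolding smooth_on_def by blast
  then obtain G where "\<forall>y\<in>U. ((\<lambda>t. F (y + t *\<^sub>R v)) has_vector_derivative G y) (at 0)"
    "continuous_on U G" by (auto simp only: iter_diff.simps)
  then show ?thesis using that by blast
qed

lemma dd_eq: "((\<lambda>t. F (y + t *\<^sub>R v)) has_vector_derivative D) (at 0) \<Longrightarrow> dd F y v = D"
  unfolding dd_def by (rule vector_derivative_at)

lemma shift_deriv:
  fixes y w :: "'a::real_normed_vector" and F :: "'a \<Rightarrow> 'b::real_normed_vector"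
  assumes hw: "((\<lambda>t. F ((y + s0 *\<^sub>R w) + t *\<^sub>R w)) has_vector_derivative D) (at 0)"
  shows "((\<lambda>s. F (y + s *\<^sub>R w)) has_vector_derivative D) (at s0)"
proof -
  have g: "((\<lambda>s. s - s0) has_vector_derivative 1) (at s0)"
    using has_vector_derivative_diff[OF has_vector_derivative_id has_vector_derivative_const, of s0 "at s0"] by simp
  have hw': "((\<lambda>t. F ((y + s0 *\<^sub>R w) + t *\<^sub>R w)) has_vector_derivative D) (at ((\<lambda>s. s - s0) s0))"
    using hw by simp
  have "(((\<lambda>t. F ((y + s0 *\<^sub>R w) + t *\<^sub>R w)) \<circ> (\<lambda>s. s - s0)) has_vector_derivative 1 *\<^sub>R D) (at s0)"
    by (rule vector_diff_chain_at[OF g hw'])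
  moreover have "((\<lambda>t. F ((y + s0 *\<^sub>R w) + t *\<^sub>R w)) \<circ> (\<lambda>s. s - s0)) = (\<lambda>s. F (y + s *\<^sub>R w))"
  proof (rule ext)
    fix s
    have "s0 *\<^sub>R w + (s - s0) *\<^sub>R w = s *\<^sub>R w" by (simp add: scaleR_left_diff_distrib)
    then have "(y + s0 *\<^sub>R w) + (s - s0) *\<^sub>R w = y + s *\<^sub>R w" by (simp add: add.assoc)
    then show "((\<lambda>t. F ((y + s0 *\<^sub>R w) + t *\<^sub>R w)) \<circ> (\<lambda>s. s - s0)) s = F (y + s *\<^sub>R w)"
      by (simp only: o_def)
  qed
  ultimately show ?thesis by (metis scaleR_one)
qed
lemma dd_add:
  fixes F :: "'a::real_normed_vector \<Rightarrow> complex"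
  assumes U: "open U" "x \<in> U" and sm: "smooth_on U F"
  shows "dd F x (v + w) = dd F x v + dd F x w"
proof -
  obtain Gv where hv: "\<And>y. y \<in> U \<Longrightarrow> ((\<lambda>t. F (y + t *\<^sub>R v)) has_vector_derivative Gv y) (at 0)"
    and cv: "continuous_on U Gv" using smooth_dir[OF sm] by metis
  obtain Gw where hw: "\<And>y. y \<in> U \<Longrightarrow> ((\<lambda>t. F (y + t *\<^sub>R w)) has_vector_derivative Gw y) (at 0)"
    and cw: "continuous_on U Gw" using smooth_dir[OF sm] by metis
  have shift: "((\<lambda>s. F (y + s *\<^sub>R w)) has_vector_derivative Gw (y + s0 *\<^sub>R w)) (at s0)"
    if "y + s0 *\<^sub>R w \<in> U" for y s0
    using shift_deriv[OF hw[OF that]] .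
  have cwx: "continuous (at x) Gw" using cw U continuous_on_eq_continuous_at by blast
  have main: "((\<lambda>t. F (x + t *\<^sub>R (v + w))) has_vector_derivative (Gv x + Gw x)) (at 0)"
    unfolding has_vector_derivative_def has_derivative_at_alt
  proof (intro conjI allI impI)
    show "bounded_linear (\<lambda>t. t *\<^sub>R (Gv x + Gw x))" by (rule bounded_linear_scaleR_left)
    fix e :: real assume e: "e > 0"
    have "((\<lambda>t. F (x + t *\<^sub>R v)) has_derivative (\<lambda>t. t *\<^sub>R Gv x)) (at 0)"
      using hv[OF U(2)] unfolding has_vector_derivative_def .
    then obtain d2 where d2: "d2 > 0" and
      d2': "\<And>t. norm (t - 0) < d2 \<Longrightarrow> norm (F (x + t *\<^sub>R v) - F (x + 0 *\<^sub>R v) - (t - 0) *\<^sub>R Gv x) \<le> e/2 * norm (t - 0)"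
      unfolding has_derivative_at_alt using e by (meson half_gt_zero)
    obtain d1 where d1: "d1 > 0" and d1': "\<And>z. dist z x < d1 \<Longrightarrow> dist (Gw z) (Gw x) < e/2"
      using cwx e unfolding continuous_at_eps_delta by (meson half_gt_zero)
    obtain r where r: "r > 0" "ball x r \<subseteq> U" using U open_contains_ball by blast
    define d0 where "d0 = min d1 r"
    define d where "d = min d2 (d0 / (norm v + norm w + 1))"
    have d0: "d0 > 0" using d1 r by (simp add: d0_def)
    have "norm v + norm w + 1 > 0" using norm_ge_zero[of v] norm_ge_zero[of w] by linarith
    then have dpos: "d > 0" using d2 d0 by (simp add: d_def)
    show "\<exists>d>0. \<forall>t. norm (t - 0) < d \<longrightarrow>
        norm (F (x + t *\<^sub>R (v + w)) - F (x + 0 *\<^sub>R (v + w)) - (t - 0) *\<^sub>R (Gv x + Gw x)) \<le> e * norm (t - 0)"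
    proof (intro exI[of _ d] conjI allI impI dpos)
      fix t :: real assume t: "norm (t - 0) < d"
      define a where "a = x + t *\<^sub>R v"
      have near: "norm (a + s *\<^sub>R w - x) < d0" if s: "s \<in> cball 0 \<bar>t\<bar>" for s
      proof -
        have sa: "\<bar>s\<bar> \<le> \<bar>t\<bar>" using s by (simp add: dist_norm)
        have "a + s *\<^sub>R w - x = t *\<^sub>R v + s *\<^sub>R w" by (simp add: a_def)
        then have "norm (a + s *\<^sub>R w - x) \<le> norm (t *\<^sub>R v) + norm (s *\<^sub>R w)"
          by (metis norm_triangle_ineq)
        also have "\<dots> = \<bar>t\<bar> * norm v + \<bar>s\<bar> * norm w" by simp
        also have "\<dots> \<le> \<bar>t\<bar> * norm v + \<bar>t\<bar> * norm w"
          using mult_right_mono[OF sa norm_ge_zero[of w]] by linarith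
        also have "\<dots> = \<bar>t\<bar> * (norm v + norm w)" by (simp add: distrib_left)
        also have "\<dots> \<le> \<bar>t\<bar> * (norm v + norm w + 1)" by (simp add: mult_left_mono)
        also have "\<dots> < d0"
        proof -
          have "\<bar>t\<bar> < d0 / (norm v + norm w + 1)" using t by (simp add: d_def)
          moreover have "norm v + norm w + 1 > 0" using norm_ge_zero[of v] norm_ge_zero[of w] by linarith
          ultimately show ?thesis
            by (simp add: pos_less_divide_eq)
        qed
        finally show ?thesis .
      qed
      have inU: "a + s *\<^sub>R w \<in> U" if "s \<in> cball 0 \<bar>t\<bar>" for s
        using near[OF that] r(2) by (auto simp: d0_def dist_norm norm_minus_commute)
      have gb: "norm (Gw (a + s *\<^sub>R w) - Gw x) \<le> e/2" if "s \<in> cball 0 \<bar>t\<bar>" for s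
        using d1'[of "a + s *\<^sub>R w"] near[OF that] by (simp add: d0_def dist_norm)
      define f where "f s = F (a + s *\<^sub>R w) - s *\<^sub>R Gw x" for s
      have fd: "(f has_derivative (\<lambda>h. h *\<^sub>R (Gw (a + s *\<^sub>R w) - Gw x))) (at s within cball 0 \<bar>t\<bar>)"
        if "s \<in> cball 0 \<bar>t\<bar>" for s
      proof -
        have "(f has_vector_derivative (Gw (a + s *\<^sub>R w) - Gw x)) (at s)"
          unfolding f_def using shift[OF inU[OF that]] by (intro derivative_eq_intros) auto
        then show ?thesis unfolding has_vector_derivative_def by (rule has_derivative_at_withinI)
      qed
      have ob: "onorm (\<lambda>h::real. h *\<^sub>R (Gw (a + s *\<^sub>R w) - Gw x)) \<le> e/2" if "s \<in> cball 0 \<bar>t\<bar>" for s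
        using onorm_scaleR_left[OF bounded_linear_ident, of "Gw (a + s *\<^sub>R w) - Gw x"] gb[OF that]
        by (simp add: onorm_id)
      have b1: "norm (f t - f 0) \<le> e/2 * norm (t - 0)"
        by (rule differentiable_bound[OF convex_cball fd ob]) auto
      have b2: "norm (F a - F x - t *\<^sub>R Gv x) \<le> e/2 * norm t"
        using d2'[of t] t by (simp add: a_def d_def)
      have eq: "F (x + t *\<^sub>R (v + w)) - F (x + 0 *\<^sub>R (v + w)) - (t - 0) *\<^sub>R (Gv x + Gw x)
             = (f t - f 0) + (F a - F x - t *\<^sub>R Gv x)"
        by (simp add: f_def a_def scaleR_add_right add.assoc)
      have b1': "norm (f t - f 0) \<le> e/2 * norm t" using b1 by simp
      have "norm ((f t - f 0) + (F a - F x - t *\<^sub>R Gv x)) \<le> e/2 * norm t + e/2 * norm t"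
        by (rule order_trans[OF norm_triangle_ineq add_mono[OF b1' b2]])
      then show "norm (F (x + t *\<^sub>R (v + w)) - F (x + 0 *\<^sub>R (v + w)) - (t - 0) *\<^sub>R (Gv x + Gw x)) \<le> e * norm (t - 0)"
        unfolding eq by simp
    qed
  qed
  have 1: "dd F x (v + w) = Gv x + Gw x" by (rule dd_eq[OF main])
  have 2: "dd F x v = Gv x" by (rule dd_eq[OF hv[OF U(2)]])
  have 3: "dd F x w = Gw x" by (rule dd_eq[OF hw[OF U(2)]])
  show ?thesis unfolding 1 2 3 ..
qed

lemma dd_scale:
  fixes F :: "'a::real_normed_vector \<Rightarrow> complex"
  assumes U: "x \<in> U" and sm: "smooth_on U F"
  shows "dd F x (c *\<^sub>R v) = of_real c * dd F x v"
proof -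
  obtain Gv where hv: "\<And>y. y \<in> U \<Longrightarrow> ((\<lambda>t. F (y + t *\<^sub>R v)) has_vector_derivative Gv y) (at 0)"
    using smooth_dir[OF sm] by metis
  have g: "((\<lambda>t. c * t) has_vector_derivative c) (at 0)" by (auto intro!: derivative_eq_intros)
  have "(((\<lambda>t. F (x + t *\<^sub>R v)) \<circ> (\<lambda>t. c * t)) has_vector_derivative c *\<^sub>R Gv x) (at 0)"
    by (rule vector_diff_chain_at[OF g]) (use hv[OF U] in simp)
  moreover have "((\<lambda>t. F (x + t *\<^sub>R v)) \<circ> (\<lambda>t. c * t)) = (\<lambda>t. F (x + t *\<^sub>R (c *\<^sub>R v)))"
    by (auto simp: o_def mult.commute)
  ultimately have "dd F x (c *\<^sub>R v) = c *\<^sub>R Gv x" by (intro dd_eq) simp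
  then show ?thesis using dd_eq[OF hv[OF U]] by (simp add: scaleR_conv_of_real)
qed



lemma elim_exists:
  fixes f :: "'i \<Rightarrow> 'j \<Rightarrow> 'a::field"
  assumes "finite J"
  shows "finite I \<Longrightarrow> card J < card I \<Longrightarrow> \<exists>c. (\<exists>i\<in>I. c i \<noteq> 0) \<and> (\<forall>j\<in>J. (\<Sum>i\<in>I. c i * f i j) = 0)"
  using assms
proof (induction J arbitrary: I f rule: finite_induct)
  case empty
  then obtain i where "i \<in> I" by (metis card.empty all_not_in_conv card_eq_0_iff not_less0)
  then show ?case by (intro exI[of _ "\<lambda>_. 1"]) auto
next
  case (insert j0 J)
  show ?case
  proof (cases "\<forall>i\<in>I. f i j0 = 0")
    case True
    have "card J < card I" using insert by simp
    then obtain c where c: "\<exists>i\<in>I. c i \<noteq> 0" "\<forall>j\<in>J. (\<Sum>i\<in>I. c i * f i j) = 0"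
      using insert.IH[OF insert.prems(1)] by blast
    then show ?thesis using True by (intro exI[of _ c]) auto
  next
    case False
    then obtain i0 where i0: "i0 \<in> I" "f i0 j0 \<noteq> 0" by blast
    define I' where "I' = I - {i0}"
    have fI': "finite I'" using insert.prems by (simp add: I'_def)
    have cI': "card J < card I'" using insert.prems i0 insert.hyps by (simp add: I'_def)
    define g where "g i j = f i j - (f i j0 / f i0 j0) * f i0 j" for i j
    obtain c' where c': "\<exists>i\<in>I'. c' i \<noteq> 0" "\<forall>j\<in>J. (\<Sum>i\<in>I'. c' i * g i j) = 0"
      using insert.IH[OF fI' cI', of g] by blast
    define S where "S = (\<Sum>i\<in>I'. c' i * f i j0)"
    define c where "c i = (if i = i0 then - S / f i0 j0 else c' i)" for i
    have split: "(\<Sum>i\<in>I. c i * f i j) = c i0 * f i0 j + (\<Sum>i\<in>I'. c' i * f i j)" for j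
    proof -
      have "(\<Sum>i\<in>I. c i * f i j) = c i0 * f i0 j + (\<Sum>i\<in>I'. c i * f i j)"
        using insert.prems(1) i0(1) unfolding I'_def by (simp add: sum.remove)
      moreover have "(\<Sum>i\<in>I'. c i * f i j) = (\<Sum>i\<in>I'. c' i * f i j)"
        by (rule sum.cong) (auto simp: c_def I'_def)
      ultimately show ?thesis by simp
    qed
    have "\<forall>j\<in>insert j0 J. (\<Sum>i\<in>I. c i * f i j) = 0"
    proof
      fix j assume j: "j \<in> insert j0 J"
      show "(\<Sum>i\<in>I. c i * f i j) = 0"
      proof (cases "j = j0")
        case True
        then show ?thesis using i0 unfolding split by (simp add: c_def S_def)
      next
        case False
        then have jJ: "j \<in> J" using j by simp
        have "(\<Sum>i\<in>I'. c' i * f i j) = (\<Sum>i\<in>I'. c' i * g i j + (c' i * f i j0) * (f i0 j / f i0 j0))"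
          by (rule sum.cong) (auto simp: g_def field_simps)
        also have "\<dots> = (\<Sum>i\<in>I'. c' i * g i j) + S * (f i0 j / f i0 j0)"
          by (simp add: sum.distrib S_def sum_distrib_right mult.assoc sum_divide_distrib)
        also have "\<dots> = S * (f i0 j / f i0 j0)" using c'(2) jJ by simp
        finally show ?thesis using i0 unfolding split by (simp add: c_def)
      qed
    qed
    moreover have "\<exists>i\<in>I. c i \<noteq> 0" using c'(1) by (auto simp: c_def I'_def)
    ultimately show ?thesis by blast
  qed
qed

lemma hol_bound:
  assumes hk: "hol_indep G J x k"
  shows "k \<le> dim (lie_alg G)"
proof (rule ccontr)
  assume kd: "\<not> k \<le> dim (lie_alg G)"
  from hk obtain U F where U: "open U" "x \<in> U" and sm0: "\<forall>i<k. smooth_on U (F i) \<and>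
               (\<forall>y\<in>U \<inter> G. \<forall>X\<in>lie_alg G. dd (F i) y (y ** J X) = \<i> * dd (F i) y (y ** X))"
    and ind0: "\<forall>c::nat \<Rightarrow> complex. (\<forall>X\<in>lie_alg G. (\<Sum>i<k. c i * dd (F i) x (x ** X)) = 0)
                \<longrightarrow> (\<forall>i<k. c i = 0)"
    unfolding hol_indep_def by blast
  have sm: "\<And>i. i < k \<Longrightarrow> smooth_on U (F i)" using sm0 by blast
  have ind: "\<And>c::nat \<Rightarrow> complex. (\<forall>X\<in>lie_alg G. (\<Sum>i<k. c i * dd (F i) x (x ** X)) = 0)
                \<Longrightarrow> (\<forall>i<k. c i = 0)" using ind0 by blast
  obtain B where B: "B \<subseteq> lie_alg G" "independent B" "lie_alg G \<subseteq> span B" "card B = dim (lie_alg G)"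
    using basis_exists by blast
  have fB: "finite B" using B(2) by (rule finiteI_independent)
  obtain c where c: "\<exists>i\<in>{..<k}. c i \<noteq> 0" "\<forall>b\<in>B. (\<Sum>i\<in>{..<k}. c i * dd (F i) x (x ** b)) = 0"
    using elim_exists[OF fB, of "{..<k}" "\<lambda>i b. dd (F i) x (x ** b)"] kd B(4) by auto
  define \<psi> where "\<psi> X = (\<Sum>i<k. c i * dd (F i) x (x ** X))" for X
  have add: "\<psi> (X + Y) = \<psi> X + \<psi> Y" for X Y
    unfolding \<psi>_def matrix_add_ldistrib
    by (simp add: dd_add[OF U sm] distrib_left sum.distrib)
  have scl: "\<psi> (a *\<^sub>R X) = of_real a * \<psi> X" for a X
    unfolding \<psi>_def matrix_scalar_ac scalar_matrix_assoc[symmetric]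
    by (simp add: dd_scale[OF U(2) sm] sum_distrib_left mult_ac)
  have "\<psi> X = 0" if "X \<in> lie_alg G" for X
  proof -
    have "X \<in> span B" using that B(3) by blast
    then show ?thesis
    proof (induction rule: span_induct_alt)
      case base
      have "\<psi> 0 = \<psi> (0 *\<^sub>R 0)" by simp
      also have "\<dots> = 0" by (simp only: scl) simp
      finally show ?case .
    next
      case (step a b Y)
      have e1: "\<psi> (a *\<^sub>R b + Y) = of_real a * \<psi> b + \<psi> Y" by (simp only: add scl)
      have e2: "\<psi> b = 0" using c(2) step(1) by (simp add: \<psi>_def)
      show ?case unfolding e1 e2 using step(2) by simp
    qed
  qed
  then have "\<forall>i<k. c i = 0" using ind unfolding \<psi>_def by blast
  then show False using c(1) by auto
qed



definition supp :: "('n::finite \<times> 'n) set \<Rightarrow> (real^'n^'n) set" where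
  "supp P = {X. \<forall>a b. (a, b) \<notin> P \<longrightarrow> X $ a $ b = 0}"

definition Emat :: "'n::finite \<Rightarrow> 'n \<Rightarrow> real^'n^'n" where
  "Emat a b = axis a (axis b 1)"

lemma Emat_nth: "Emat a b $ i $ j = (if i = a \<and> j = b then 1 else 0)"
  by (simp add: Emat_def axis_def)

lemma Emat_mult: "Emat a b ** Emat b' c = (if b = b' then Emat a c else 0)"
proof -
  have "(Emat a b ** Emat b' c) $ i $ j = (if b = b' then Emat a c else 0) $ i $ j" for i j
  proof -
    have "(Emat a b ** Emat b' c) $ i $ j = (\<Sum>k\<in>UNIV. if k = b then (if i = a \<and> b = b' \<and> j = c then 1 else 0) else (0::real))"
      unfolding matrix_matrix_mult_def vec_lambda_beta Emat_nth by (rule sum.cong) auto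
    also have "\<dots> = (if i = a \<and> b = b' \<and> j = c then 1 else 0)" by simp
    finally show ?thesis by (simp add: Emat_nth)
  qed
  then show ?thesis by (simp add: vec_eq_iff)
qed

lemma mm_add_r: "((A::real^'n::finite^'m::finite) + B) ** (C::real^'k::finite^'n) = A ** C + B ** C"
  by (simp add: matrix_matrix_mult_def vec_eq_iff sum.distrib distrib_right)

lemma mm_diff_r: "((A::real^'n::finite^'m::finite) - B) ** (C::real^'k::finite^'n) = A ** C - B ** C"
  by (simp add: matrix_matrix_mult_def vec_eq_iff sum_subtractf left_diff_distrib)

lemma mm_diff_l: "(A::real^'n::finite^'m::finite) ** ((B::real^'k::finite^'n) - C) = A ** B - A ** C"
  by (simp add: matrix_matrix_mult_def vec_eq_iff sum_subtractf right_diff_distrib)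

lemma subspace_supp: "subspace (supp P)"
  unfolding subspace_def supp_def by auto

lemma supp_mult:
  assumes "X \<in> supp P" "Y \<in> supp Q" shows "X ** Y \<in> supp (P O Q)"
  unfolding supp_def
proof (intro CollectI allI impI)
  fix a b assume ab: "(a, b) \<notin> P O Q"
  have h: "\<forall>k\<in>UNIV. X $ a $ k * Y $ k $ b = 0"
  proof
    fix k
    show "X $ a $ k * Y $ k $ b = 0"
    proof (cases "(a,k) \<in> P")
      case True
      then have "(k,b) \<notin> Q" using ab by (auto intro: relcompI)
      then have "Y $ k $ b = 0" using assms(2) unfolding supp_def by blast
      then show ?thesis by simp
    next
      case False
      then have "X $ a $ k = 0" using assms(1) unfolding supp_def by blast
      then show ?thesis by simp
    qed
  qed
  show "(X ** Y) $ a $ b = 0" using sum.neutral[OF h] by (simp add: matrix_matrix_mult_def)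
qed

lemma supp_mono: "P \<subseteq> Q \<Longrightarrow> supp P \<subseteq> supp Q"
  unfolding supp_def by auto

lemma supp_empty: "supp {} = {0}"
  unfolding supp_def by (auto simp: vec_eq_iff)

lemma Emat_in_supp: "(a, b) \<in> P \<Longrightarrow> Emat a b \<in> supp P"
  unfolding supp_def by (auto simp: Emat_nth)

lemma supp_span:
  fixes P :: "('n::finite \<times> 'n) set"
  shows "supp P \<subseteq> span ((\<lambda>(a,b). Emat a b) ` P)"
proof
  fix X :: "real^'n^'n" assume X: "X \<in> supp P"
  let ?E = "(\<lambda>(a,b). Emat a b) ` P"
  have EB: "?E \<subseteq> Basis" unfolding Basis_vec_def Emat_def by auto
  have z: "inner X u = 0" if "u \<in> Basis - ?E" for u
  proof -
    from that obtain a b where u: "u = Emat a b" unfolding Basis_vec_def Emat_def by auto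
    with that have "(a,b) \<notin> P" by auto
    then show ?thesis using X u by (simp add: Emat_def inner_axis supp_def)
  qed
  have "X = (\<Sum>u\<in>Basis. inner X u *\<^sub>R u)" by (simp add: euclidean_representation)
  also have "\<dots> = (\<Sum>u\<in>?E. inner X u *\<^sub>R u)"
    by (rule sum.mono_neutral_right) (use EB z in auto)
  also have "\<dots> \<in> span ?E" by (intro span_sum span_scale span_base)
  finally show "X \<in> span ?E" .
qed

lemma dim_supp: "dim (supp (P :: ('n::finite \<times> 'n) set)) = card P"
proof -
  let ?E = "(\<lambda>(a,b). Emat a b) ` P"
  have EB: "?E \<subseteq> Basis" unfolding Basis_vec_def Emat_def by auto
  have inj: "inj_on (\<lambda>(a,b). Emat a b) P"
    by (auto simp: inj_on_def Emat_def axis_eq_axis)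
  show ?thesis
  proof (rule dim_unique)
    show "?E \<subseteq> supp P" using Emat_in_supp by auto
    show "supp P \<subseteq> span ?E" by (rule supp_span)
    show "independent ?E" by (rule independent_mono[OF independent_Basis EB])
    show "card ?E = card P" using card_image[OF inj] .
  qed
qed

locale nilp =
  fixes P :: "('n::finite \<times> 'n) set"
  assumes PP: "P O P \<subseteq> P"
    and PPP: "P O P O P = {}"
begin

definition grp :: "(real^'n^'n) set" where
  "grp = {Y. Y - mat 1 \<in> supp P}"

lemma cube0: "X \<in> supp P \<Longrightarrow> X ** X ** X = 0"
proof -
  assume X: "X \<in> supp P"
  have "X ** X ** X \<in> supp (P O P O P)" using supp_mult[OF supp_mult[OF X X] X] by (simp add: O_assoc)
  then show ?thesis using PPP supp_empty by auto
qed

lemma grp_mult: "y \<in> grp \<Longrightarrow> z \<in> grp \<Longrightarrow> y ** z \<in> grp"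
proof -
  assume y: "y \<in> grp" and z: "z \<in> grp"
  define X where "X = y - mat 1"
  define Z where "Z = z - mat 1"
  have X: "X \<in> supp P" and Z: "Z \<in> supp P" using y z by (auto simp: grp_def X_def Z_def)
  have "y ** z = (mat 1 + X) ** (mat 1 + Z)" by (simp add: X_def Z_def)
  also have "\<dots> = mat 1 + (X + Z + X ** Z)"
    by (simp add: matrix_add_ldistrib mm_add_r)
  finally have e: "y ** z - mat 1 = X + Z + X ** Z" by simp
  have "X ** Z \<in> supp P" using supp_mult[OF X Z] supp_mono[OF PP] by auto
  then show ?thesis unfolding grp_def using e X Z subspace_supp[of P]
    by (simp add: subspace_add)
qed

lemma one_grp: "mat 1 \<in> grp"
  unfolding grp_def supp_def by simp

lemma grp_inv:
  assumes y: "y \<in> grp"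
  obtains z where "z \<in> grp" "z ** y = mat 1" "y ** z = mat 1"
proof -
  define X where "X = y - mat 1"
  have X: "X \<in> supp P" using y by (auto simp: grp_def X_def)
  define z where "z = mat 1 - X + X ** X"
  have XX: "X ** X \<in> supp P" using supp_mult[OF X X] supp_mono[OF PP] by auto
  have "z - mat 1 = X ** X - X" by (simp add: z_def)
  then have zg: "z \<in> grp" unfolding grp_def using X XX subspace_supp[of P]
    by (simp add: subspace_diff)
  have c: "X ** X ** X = 0" by (rule cube0[OF X])
  have c': "X ** (X ** X) = 0" using c by (simp only: matrix_mul_assoc)
  have yX: "y = mat 1 + X" by (simp add: X_def)
  have e1: "z ** y = z + z ** X" unfolding yX by (simp add: matrix_add_ldistrib)
  have e2: "z ** X = X - X ** X + X ** X ** X" unfolding z_def by (simp add: mm_add_r mm_diff_r)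
  have "z ** y = mat 1" unfolding e1 e2 c by (simp add: z_def)
  moreover have "y ** z = mat 1"
  proof -
    have e1: "y ** z = z + X ** z" unfolding yX by (simp add: mm_add_r)
    have e2: "X ** z = X - X ** X + X ** (X ** X)" unfolding z_def by (simp add: matrix_add_ldistrib mm_diff_l)
    show ?thesis unfolding e1 e2 c' by (simp add: z_def)
  qed
  ultimately show ?thesis using zg that by blast
qed


lemma lie_alg_grp: "lie_alg grp = supp P"
proof
  show "lie_alg grp \<subseteq> supp P"
  proof
    fix X assume "X \<in> lie_alg grp"
    then obtain \<gamma> where g: "\<forall>t. \<gamma> t \<in> grp" "\<gamma> 0 = mat 1"
      and d: "(\<gamma> has_vector_derivative X) (at 0)" unfolding lie_alg_def by blast
    show "X \<in> supp P" unfolding supp_def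
    proof (intro CollectI allI impI)
      fix a b assume ab: "(a, b) \<notin> P"
      have bl: "bounded_linear (\<lambda>Y::real^'n^'n. Y $ a $ b)"
        by (rule bounded_linear_compose[of "\<lambda>x. x $ b" "\<lambda>Y. Y $ a"]) (rule bounded_linear_vec_nth)+
      have d1: "((\<lambda>t. \<gamma> t $ a $ b) has_vector_derivative X $ a $ b) (at 0)"
        using bounded_linear.has_vector_derivative[OF bl d] .
      have "\<gamma> t $ a $ b = mat 1 $ a $ b" for t
        using g(1) ab unfolding grp_def supp_def by auto
      then have "(\<lambda>t. \<gamma> t $ a $ b) = (\<lambda>t. mat 1 $ a $ b)" by auto
      then have d2: "((\<lambda>t. \<gamma> t $ a $ b) has_vector_derivative 0) (at 0)" by simp
      show "X $ a $ b = 0" using vector_derivative_unique_at[OF d1 d2] .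
    qed
  qed
  show "supp P \<subseteq> lie_alg grp"
  proof
    fix X assume X: "X \<in> supp P"
    have "(\<lambda>t::real. mat 1 + t *\<^sub>R X) t \<in> grp" for t
      unfolding grp_def using X subspace_supp[of P] by (simp add: subspace_scale)
    moreover have "((\<lambda>t::real. mat 1 + t *\<^sub>R X) has_vector_derivative X) (at 0)"
      by (auto intro!: derivative_eq_intros)
    ultimately show "X \<in> lie_alg grp" unfolding lie_alg_def by (intro CollectI exI[of _ "\<lambda>t::real. mat 1 + t *\<^sub>R X"]) simp
  qed
qed

lemma PP_irrefl: "(a, a) \<notin> P O P"
proof
  assume "(a, a) \<in> P O P"
  then obtain b where ab: "(a,b) \<in> P" and ba: "(b,a) \<in> P" by blast
  have "(a,b) \<in> P O P O P" by (rule relcompI[OF ab relcompI[OF ba ab]])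
  then show False using PPP by simp
qed

lemma comm_ideal: "commutator_ideal (supp P) = supp (P O P)"
proof (rule equalityI)
  show "commutator_ideal (supp P) \<subseteq> supp (P O P)"
    unfolding commutator_ideal_def
  proof (rule span_minimal)
    show "subspace (supp (P O P))" by (rule subspace_supp)
    show "{X ** Y - Y ** X |X Y. X \<in> supp P \<and> Y \<in> supp P} \<subseteq> supp (P O P)"
    proof clarify
      fix X Y assume X: "X \<in> supp P" and Y: "Y \<in> supp P"
      show "X ** Y - Y ** X \<in> supp (P O P)"
        using supp_mult[OF X Y] supp_mult[OF Y X] subspace_supp[of "P O P"] by (simp add: subspace_diff)
    qed
  qed
  have "(\<lambda>(a,b). Emat a b) ` (P O P) \<subseteq> {X ** Y - Y ** X |X Y. X \<in> supp P \<and> Y \<in> supp P}"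
  proof
    fix x assume "x \<in> (\<lambda>(a,b). Emat a b) ` (P O P)"
    then obtain a c where x: "x = Emat a c" and ac: "(a, c) \<in> P O P" by auto
    then obtain b where ab: "(a,b) \<in> P" and bc: "(b,c) \<in> P" by blast
    have "c \<noteq> a" using PP_irrefl ac by blast
    then have "Emat a c = Emat a b ** Emat b c - Emat b c ** Emat a b" by (simp add: Emat_mult)
    then show "x \<in> {X ** Y - Y ** X |X Y. X \<in> supp P \<and> Y \<in> supp P}"
      using Emat_in_supp[OF ab] Emat_in_supp[OF bc] x by blast
  qed
  then show "supp (P O P) \<subseteq> commutator_ideal (supp P)"
    unfolding commutator_ideal_def using supp_span[of "P O P"] span_mono by blast
qed

end


lemma linear_lmul: "linear (\<lambda>y::real^'n::finite^'n. A ** y)"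
  by (rule linearI) (simp_all add: matrix_add_ldistrib matrix_scalar_ac scalar_matrix_assoc)

lemma hol_transl:
  assumes grp_mult: "\<And>a b. a \<in> G \<Longrightarrow> b \<in> G \<Longrightarrow> a ** b \<in> G"
    and gi: "ginv \<in> G" and inv: "ginv ** g = mat 1"
    and h: "hol_indep G J x k"
  shows "hol_indep G J (g ** x) k"
proof -
  from h obtain U F where U: "open U" "x \<in> U" and sm0: "\<forall>i<k. smooth_on U (F i) \<and>
               (\<forall>y\<in>U \<inter> G. \<forall>X\<in>lie_alg G. dd (F i) y (y ** J X) = \<i> * dd (F i) y (y ** X))"
    and ind0: "\<forall>c::nat \<Rightarrow> complex. (\<forall>X\<in>lie_alg G. (\<Sum>i<k. c i * dd (F i) x (x ** X)) = 0)
                \<longrightarrow> (\<forall>i<k. c i = 0)"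
    unfolding hol_indep_def by blast
  define L where "L = (\<lambda>y::real^'a^'a. ginv ** y)"
  have lin: "linear L" unfolding L_def by (rule linear_lmul)
  define U' where "U' = L -` U"
  define F' where "F' i y = F i (L y)" for i y
  have "open U'" unfolding U'_def
    by (rule continuous_open_vimage[OF U(1)])
       (use lin in \<open>simp add: linear_continuous_at linear_conv_bounded_linear\<close>)
  moreover have gx: "L (g ** x) = x" unfolding L_def by (simp add: matrix_mul_assoc inv)
  then have "g ** x \<in> U'" using U by (simp add: U'_def)
  moreover have "smooth_on U' (F' i)" if "i < k" for i
    using smooth_comp[OF lin, of U "F i"] sm0 that unfolding U'_def F'_def by blast
  moreover have "dd (F' i) y (y ** J X) = \<i> * dd (F' i) y (y ** X)"
    if "i < k" "y \<in> U' \<inter> G" "X \<in> lie_alg G" for i y X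
  proof -
    have Ly: "L y \<in> U \<inter> G" using that(2) gi grp_mult unfolding U'_def L_def by auto
    have "dd (F' i) y (y ** J X) = dd (F i) (L y) (L y ** J X)"
      unfolding F'_def dd_comp[OF lin] by (simp add: L_def matrix_mul_assoc)
    also have "\<dots> = \<i> * dd (F i) (L y) (L y ** X)" using sm0 that(1,3) Ly by blast
    also have "dd (F i) (L y) (L y ** X) = dd (F' i) y (y ** X)"
      unfolding F'_def dd_comp[OF lin] by (simp add: L_def matrix_mul_assoc)
    finally show ?thesis .
  qed
  moreover have "\<forall>i<k. c i = 0"
    if "\<forall>X\<in>lie_alg G. (\<Sum>i<k. c i * dd (F' i) (g ** x) ((g ** x) ** X)) = 0" for c :: "nat \<Rightarrow> complex"
  proof -
    have "dd (F' i) (g ** x) ((g ** x) ** X) = dd (F i) x (x ** X)" for i X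
      unfolding F'_def dd_comp[OF lin] gx by (simp add: L_def matrix_mul_assoc inv)
    then show ?thesis using that ind0 by simp
  qed
  ultimately show ?thesis unfolding hol_indep_def
    by (intro exI[of _ U'] exI[of _ F']) blast
qed


context nilp begin

lemma exists_hol1:
  assumes card: "2 * card (P O P) < card P" and acs: "left_inv_acs grp J" and x: "x \<in> grp"
  shows "hol_indep grp J x 1"
proof -
  define L where "L = supp P"
  define K where "K = supp (P O P)"
  have LA: "lie_alg grp = L" unfolding L_def by (rule lie_alg_grp)
  have JL: "\<And>X. X \<in> L \<Longrightarrow> J X \<in> L" and JJ: "\<And>X. X \<in> L \<Longrightarrow> J (J X) = - X"
    and Jadd: "\<And>X Y. X \<in> L \<Longrightarrow> Y \<in> L \<Longrightarrow> J (X + Y) = J X + J Y"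
    and Jsc: "\<And>X a. X \<in> L \<Longrightarrow> J (a *\<^sub>R X) = a *\<^sub>R J X"
    using acs unfolding left_inv_acs_def LA by auto
  have subL: "subspace L" unfolding L_def by (rule subspace_supp)
  have KL: "K \<subseteq> L" unfolding K_def L_def by (rule supp_mono[OF PP])
  have J0: "J 0 = 0"
  proof -
    have "J 0 = J (0 *\<^sub>R 0)" by simp
    also have "\<dots> = 0" using Jsc[of 0 0] subspace_0[OF subL] by simp
    finally show ?thesis .
  qed
  obtain Bk where Bk: "Bk \<subseteq> K" "independent Bk" "K \<subseteq> span Bk" "card Bk = dim K"
    using basis_exists by blast
  have fBk: "finite Bk" using Bk(2) by (rule finiteI_independent)
  define V where "V = span (Bk \<union> J ` Bk)"
  have subV: "subspace V" unfolding V_def by (rule subspace_span)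
  have KV: "K \<subseteq> V" using Bk(3) span_mono[of Bk "Bk \<union> J ` Bk"] unfolding V_def by blast
  have JKV: "J X \<in> V" if "X \<in> K" for X
  proof -
    have "X \<in> span Bk" using that Bk(3) by blast
    then have "X \<in> L \<and> J X \<in> span (J ` Bk)"
    proof (induction rule: span_induct_alt)
      case base
      then show ?case using subspace_0[OF subL] J0 by (simp add: span_zero)
    next
      case (step c b Y)
      have bL: "b \<in> L" using step(1) Bk(1) KL by blast
      have cbL: "c *\<^sub>R b \<in> L" using subspace_scale[OF subL bL] .
      have "J (c *\<^sub>R b + Y) = c *\<^sub>R J b + J Y" using Jadd[OF cbL] step(2) Jsc[OF bL] by simp
      moreover have "c *\<^sub>R J b + J Y \<in> span (J ` Bk)"
        using span_add[OF span_scale[OF span_base[OF imageI[OF step(1)]]]] step(2) by blast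
      moreover have "c *\<^sub>R b + Y \<in> L" using subspace_add[OF subL cbL] step(2) by blast
      ultimately show ?case by simp
    qed
    then show ?thesis using span_mono[of "J ` Bk" "Bk \<union> J ` Bk"] unfolding V_def by blast
  qed
  have "dim V \<le> card (Bk \<union> J ` Bk)"
    unfolding V_def by (rule dim_le_card) (use fBk in auto)
  also have "\<dots> \<le> card Bk + card (J ` Bk)" by (rule card_Un_le)
  also have "\<dots> \<le> card Bk + card Bk" using card_image_le[OF fBk, of J] by simp
  also have "\<dots> = 2 * card (P O P)" using Bk(4) dim_supp[of "P O P"] unfolding K_def by simp
  also have "\<dots> < dim L" using card dim_supp[of P] unfolding L_def by simp
  finally have dVL: "dim V < dim L" .
  have "\<not> L \<subseteq> V" using dim_subset[of L V] dVL by linarith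
  then obtain X0 where X0: "X0 \<in> L" "X0 \<notin> V" by blast
  obtain yv z where yv: "yv \<in> V" and zo: "\<And>w. w \<in> V \<Longrightarrow> orthogonal z w" and X0e: "X0 = yv + z"
    using orthogonal_subspace_decomp_exists[of "Bk \<union> J ` Bk" X0] unfolding V_def by metis
  define \<psi> where "\<psi> Y = inner z Y" for Y
  have \<psi>V: "\<psi> Y = 0" if "Y \<in> V" for Y using zo[OF that] unfolding \<psi>_def orthogonal_def .
  have "z \<noteq> 0" using X0 X0e yv by auto
  then have \<psi>X0: "\<psi> X0 \<noteq> 0" using \<psi>V[OF yv] unfolding \<psi>_def X0e by (simp add: inner_add_right)
  define pi where "pi Y = (\<chi> a b. if (a,b) \<in> P - P O P then Y $ a $ b else 0)" for Y :: "real^'n^'n"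
  have piL: "pi Y \<in> L" for Y unfolding pi_def L_def supp_def by auto
  have pi_add: "pi (A + B) = pi A + pi B" for A B unfolding pi_def by (simp add: vec_eq_iff)
  have pi_sc: "pi (r *\<^sub>R A) = r *\<^sub>R pi A" for r A unfolding pi_def by (simp add: vec_eq_iff)
  have piK: "pi Y = 0" if "Y \<in> K" for Y
    using that unfolding pi_def K_def supp_def by (simp add: vec_eq_iff)
  have diffK: "Y - pi Y \<in> K" if "Y \<in> L" for Y
    using that unfolding pi_def K_def L_def supp_def by auto
  have piy: "pi (y ** Z) = pi Z" if "y \<in> grp" "Z \<in> L" for y Z
  proof -
    have "y ** Z = Z + (y - mat 1) ** Z" by (simp add: mm_diff_r)
    moreover have "(y - mat 1) ** Z \<in> K"
      using supp_mult[of "y - mat 1" P Z P] that unfolding grp_def K_def L_def by blast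
    ultimately show ?thesis using pi_add piK by simp
  qed
  define \<theta> where "\<theta> X = complex_of_real (\<psi> X) - \<i> * complex_of_real (\<psi> (J X))" for X
  have \<psi>_add: "\<psi> (A + B) = \<psi> A + \<psi> B" for A B unfolding \<psi>_def by (simp add: inner_add_right)
  have \<psi>_diff: "\<psi> (A - B) = \<psi> A - \<psi> B" for A B unfolding \<psi>_def by (simp add: inner_diff_right)
  have \<psi>_sc: "\<psi> (r *\<^sub>R A) = r * \<psi> A" for r A unfolding \<psi>_def by simp
  have \<psi>_neg: "\<psi> (- A) = - \<psi> A" for A unfolding \<psi>_def by simp
  have thK: "\<theta> X = \<theta> Y" if "X \<in> L" "Y \<in> L" "X - Y \<in> K" for X Y
  proof -
    have XY: "X - Y \<in> L" using subspace_diff[OF subL that(1,2)] .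
    have "\<psi> X - \<psi> Y = 0" using \<psi>V KV that(3) \<psi>_diff by (metis subsetD)
    moreover have "J X = J Y + J (X - Y)" using Jadd[OF that(2) XY] by simp
    moreover have "\<psi> (J (X - Y)) = 0" using \<psi>V JKV that(3) by blast
    ultimately show ?thesis unfolding \<theta>_def using \<psi>_add by simp
  qed
  define FF where "FF Y = \<theta> (pi Y)" for Y
  have linFF: "linear FF"
  proof (rule linearI)
    fix A B show "FF (A + B) = FF A + FF B"
      unfolding FF_def \<theta>_def pi_add Jadd[OF piL piL] \<psi>_add by (simp add: algebra_simps)
  next
    fix r A show "FF (r *\<^sub>R A) = r *\<^sub>R FF A"
      unfolding FF_def \<theta>_def pi_sc Jsc[OF piL] \<psi>_sc by (simp add: scaleR_conv_of_real algebra_simps)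
  qed
  have FFL: "FF X = \<theta> X" if "X \<in> L" for X
    unfolding FF_def using thK[OF piL that] diffK[OF that] by (metis minus_diff_eq subspace_neg subspace_supp K_def)
  have FFy: "FF (y ** X) = \<theta> X" if "y \<in> grp" "X \<in> L" for y X
    unfolding FF_def piy[OF that] using FFL[OF that(2)] unfolding FF_def .
  show ?thesis unfolding hol_indep_def
  proof (intro exI[of _ UNIV] exI[of _ "\<lambda>_. FF"] conjI allI impI ballI)
    show "open (UNIV :: (real^'n^'n) set)" by simp
    show "x \<in> UNIV" by simp
    fix i :: nat assume "i < 1"
    show "smooth_on UNIV FF" by (rule smooth_linear[OF linFF])
  next
    fix i :: nat and y X assume "i < 1" and y: "y \<in> UNIV \<inter> grp" and X: "X \<in> lie_alg grp"
    have XL: "X \<in> L" using X LA by simp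
    have "dd FF y (y ** J X) = \<theta> (J X)" unfolding dd_linear[OF linFF] using FFy[OF _ JL[OF XL]] y by simp
    also have "\<dots> = complex_of_real (\<psi> (J X)) + \<i> * complex_of_real (\<psi> X)"
      unfolding \<theta>_def JJ[OF XL] \<psi>_neg by simp
    also have "\<dots> = \<i> * \<theta> X" unfolding \<theta>_def by (simp add: algebra_simps)
    also have "\<dots> = \<i> * dd FF y (y ** X)" unfolding dd_linear[OF linFF] using FFy[OF _ XL] y by simp
    finally show "dd FF y (y ** J X) = \<i> * dd FF y (y ** X)" .
  next
    fix c :: "nat \<Rightarrow> complex" and i :: nat
    assume h: "\<forall>X\<in>lie_alg grp. (\<Sum>i<1. c i * dd FF x (x ** X)) = 0" and i: "i < 1"
    have X0g: "X0 \<in> lie_alg grp" using X0(1) LA by simp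
    have "(\<Sum>i<1. c i * dd FF x (x ** X0)) = 0" using bspec[OF h X0g] .
    then have "c 0 * \<theta> X0 = 0" using FFy[OF x X0(1)] by (simp add: dd_linear[OF linFF])
    moreover have "\<theta> X0 \<noteq> 0"
    proof
      assume "\<theta> X0 = 0"
      then have "Re (\<theta> X0) = 0" by simp
      then show False using \<psi>X0 unfolding \<theta>_def by simp
    qed
    ultimately show "c i = 0" using i by simp
  qed
qed

lemma typeT:
  assumes card: "2 * card (P O P) < card P"
  shows "type_T grp"
  unfolding type_T_def
proof (intro allI impI)
  fix J assume acs: "left_inv_acs grp J"
  define S where "S = {k. hol_indep grp J (mat 1) k}"
  have Sb: "S \<subseteq> {..dim (lie_alg grp)}" unfolding S_def using hol_bound by auto
  have fS: "finite S" using finite_subset[OF Sb] by simp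
  have 1: "1 \<in> S" unfolding S_def using exists_hol1[OF card acs one_grp] by simp
  define m where "m = Max S"
  have m1: "1 \<le> m" unfolding m_def using Max_ge[OF fS 1] .
  have mS: "m \<in> S" unfolding m_def using fS 1 by (intro Max_in) auto
  have "has_hol_type grp J m" unfolding has_hol_type_def
  proof (intro ballI conjI allI impI)
    fix x assume x: "x \<in> grp"
    obtain z where z: "z \<in> grp" "z ** x = mat 1" "x ** z = mat 1" using grp_inv[OF x] by blast
    have "hol_indep grp J (x ** mat 1) m"
      by (rule hol_transl[OF grp_mult z(1) z(2)]) (use mS S_def in auto)
    then show "hol_indep grp J x m" by simp
    fix k assume "hol_indep grp J x k"
    then have "hol_indep grp J (z ** x) k"
      using hol_transl[where G=grp and ginv=x and g=z and J=J and x=x and k=k] grp_mult x z(3) by blast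
    then have "k \<in> S" using z(2) unfolding S_def by simp
    then show "k \<le> m" unfolding m_def using Max_ge[OF fS] by blast
  qed
  then show "\<exists>m. m \<noteq> 0 \<and> has_hol_type grp J m" using m1 by (intro exI[of _ m]) simp
qed

end


lemma boff_Suc: "boff p q (Suc i) = boff p q i + bsize p q i"
  by (simp add: boff_def)

lemma boff_mono: "i \<le> j \<Longrightarrow> boff p q i \<le> boff p q j"
  unfolding boff_def by (rule sum_mono2) auto

lemma boff_lt: "i < j \<Longrightarrow> boff p q i + bsize p q i \<le> boff p q j"
  using boff_mono[of "Suc i" j p q] by (simp add: boff_Suc)

lemma block_unique:
  assumes "boff p q i \<le> k" "k < boff p q i + bsize p q i"
    "boff p q j \<le> k" "k < boff p q j + bsize p q j"
  shows "i = j"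
proof (rule ccontr)
  assume "i \<noteq> j"
  then consider "i < j" | "j < i" by linarith
  then show False
  proof cases
    case 1 then show ?thesis using boff_lt[OF 1, of p q] assms by linarith
  next
    case 2 then show ?thesis using boff_lt[OF 2, of p q] assms by linarith
  qed
qed

lemma block_exists:
  "r < boff p q n \<Longrightarrow> \<exists>i<n. boff p q i \<le> r \<and> r < boff p q i + bsize p q i"
proof (induction n)
  case 0 then show ?case by (simp add: boff_def)
next
  case (Suc n)
  show ?case
  proof (cases "r < boff p q n")
    case True then show ?thesis using Suc.IH by (meson less_SucI)
  next
    case False then show ?thesis using Suc.prems by (intro exI[of _ n]) (simp add: boff_Suc)
  qed
qed

definition shiftp :: "nat \<Rightarrow> nat \<times> nat \<Rightarrow> nat \<times> nat" where
  "shiftp o' = (\<lambda>(a,b). (o' + a, o' + b))"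

definition Blk :: "nat \<Rightarrow> (nat \<Rightarrow> nat) \<Rightarrow> (nat \<Rightarrow> nat) \<Rightarrow> (nat \<Rightarrow> (nat \<times> nat) set) \<Rightarrow> (nat \<times> nat) set" where
  "Blk n p q R = (\<Union>i<n. shiftp (boff p q i) ` R i)"

definition inblk :: "(nat \<Rightarrow> nat) \<Rightarrow> (nat \<Rightarrow> nat) \<Rightarrow> (nat \<Rightarrow> (nat \<times> nat) set) \<Rightarrow> bool" where
  "inblk p q R \<longleftrightarrow> (\<forall>i a b. (a,b) \<in> R i \<longrightarrow> a < bsize p q i \<and> b < bsize p q i)"

lemma Blk_mem: "(r, c) \<in> Blk n p q R \<longleftrightarrow>
   (\<exists>i<n. boff p q i \<le> r \<and> boff p q i \<le> c \<and> (r - boff p q i, c - boff p q i) \<in> R i)"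
  unfolding Blk_def shiftp_def by force

lemma Blk_comp:
  assumes R: "inblk p q R" and S: "inblk p q S"
  shows "Blk n p q R O Blk n p q S = Blk n p q (\<lambda>i. R i O S i)"
proof (rule set_eqI, clarify)
  fix r c
  show "(r, c) \<in> Blk n p q R O Blk n p q S \<longleftrightarrow> (r, c) \<in> Blk n p q (\<lambda>i. R i O S i)"
  proof
    assume "(r, c) \<in> Blk n p q R O Blk n p q S"
    then obtain k where rk: "(r,k) \<in> Blk n p q R" and kc: "(k,c) \<in> Blk n p q S" by blast
    obtain i where i: "i < n" "boff p q i \<le> r" "boff p q i \<le> k" "(r - boff p q i, k - boff p q i) \<in> R i"
      using rk unfolding Blk_mem by blast
    obtain j where j: "j < n" "boff p q j \<le> k" "boff p q j \<le> c" "(k - boff p q j, c - boff p q j) \<in> S j"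
      using kc unfolding Blk_mem by blast
    have k1: "k - boff p q i < bsize p q i" using R i(4) unfolding inblk_def by blast
    have k2: "k - boff p q j < bsize p q j" using S j(4) unfolding inblk_def by blast
    have "i = j" by (rule block_unique[of p q i k j]) (use i j k1 k2 in auto)
    then show "(r, c) \<in> Blk n p q (\<lambda>i. R i O S i)" unfolding Blk_mem using i j by blast
  next
    assume "(r, c) \<in> Blk n p q (\<lambda>i. R i O S i)"
    then obtain i k where i: "i < n" "boff p q i \<le> r" "boff p q i \<le> c"
      "(r - boff p q i, k) \<in> R i" "(k, c - boff p q i) \<in> S i"
      unfolding Blk_mem by blast
    have "(r, boff p q i + k) \<in> Blk n p q R" unfolding Blk_mem using i by auto
    moreover have "(boff p q i + k, c) \<in> Blk n p q S" unfolding Blk_mem using i by auto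
    ultimately show "(r, c) \<in> Blk n p q R O Blk n p q S" by blast
  qed
qed

lemma Blk_empty: "Blk n p q (\<lambda>i. {}) = {}"
  unfolding Blk_def by simp

lemma Blk_mono: "(\<And>i. R i \<subseteq> S i) \<Longrightarrow> Blk n p q R \<subseteq> Blk n p q S"
  unfolding Blk_def by blast

lemma inj_shiftp: "inj (shiftp o')"
  unfolding shiftp_def inj_def by auto

lemma card_Blk:
  assumes R: "inblk p q R" and f: "\<And>i. finite (R i)"
  shows "card (Blk n p q R) = (\<Sum>i<n. card (R i))"
proof -
  have "card (Blk n p q R) = (\<Sum>i<n. card (shiftp (boff p q i) ` R i))"
    unfolding Blk_def
  proof (rule card_UN_disjoint)
    show "\<forall>i\<in>{..<n}. \<forall>j\<in>{..<n}. i \<noteq> j \<longrightarrow> shiftp (boff p q i) ` R i \<inter> shiftp (boff p q j) ` R j = {}"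
    proof (intro ballI impI)
      fix i j :: nat assume "i \<noteq> j"
      show "shiftp (boff p q i) ` R i \<inter> shiftp (boff p q j) ` R j = {}"
      proof (rule ccontr)
        assume "shiftp (boff p q i) ` R i \<inter> shiftp (boff p q j) ` R j \<noteq> {}"
        then obtain a b a' b' where ab: "(a,b) \<in> R i" and ab': "(a',b') \<in> R j"
          and e: "boff p q i + a = boff p q j + a'" unfolding shiftp_def by auto
        have "a < bsize p q i" "a' < bsize p q j" using R ab ab' unfolding inblk_def by blast+
        then have "i = j" using block_unique[of p q i "boff p q i + a" j] e by simp
        then show False using \<open>i \<noteq> j\<close> by simp
      qed
    qed
  qed (use f in auto)
  also have "\<dots> = (\<Sum>i<n. card (R i))"
    by (rule sum.cong) (auto intro!: card_image inj_on_subset[OF inj_shiftp])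
  finally show ?thesis .
qed

definition Ploc :: "nat \<Rightarrow> nat \<Rightarrow> (nat \<times> nat) set" where
  "Ploc p q = {0..<p} \<times> {p..<p+2*q} \<union> (\<lambda>j. (p+j, p+q+j)) ` {0..<q}"

definition Qloc :: "nat \<Rightarrow> nat \<Rightarrow> (nat \<times> nat) set" where
  "Qloc p q = {0..<p} \<times> {p+q..<p+2*q}"

lemma Ploc_comp: "Ploc p q O Ploc p q = Qloc p q"
proof (rule set_eqI, clarify)
  fix a c
  show "(a, c) \<in> Ploc p q O Ploc p q \<longleftrightarrow> (a, c) \<in> Qloc p q"
  proof
    assume "(a, c) \<in> Ploc p q O Ploc p q"
    then obtain b where ab: "(a,b) \<in> Ploc p q" and bc: "(b,c) \<in> Ploc p q" by blast
    from bc have "b < p \<or> (\<exists>j<q. b = p + j \<and> c = p + q + j)" unfolding Ploc_def by auto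
    with ab show "(a, c) \<in> Qloc p q" unfolding Ploc_def Qloc_def by auto
  next
    assume "(a, c) \<in> Qloc p q"
    then have a: "a < p" and c: "p + q \<le> c" "c < p + 2*q" unfolding Qloc_def by auto
    define j where "j = c - p - q"
    have "(a, p + j) \<in> Ploc p q" using a c unfolding Ploc_def j_def by auto
    moreover have "(p + j, c) \<in> Ploc p q" using c unfolding Ploc_def j_def
      by (auto intro!: image_eqI[of _ _ "c - p - q"])
    ultimately show "(a, c) \<in> Ploc p q O Ploc p q" by blast
  qed
qed

lemma Ploc_Qloc: "Ploc p q O Qloc p q = {}"
  unfolding Ploc_def Qloc_def by auto

lemma Qloc_sub: "Qloc p q \<subseteq> Ploc p q"
  unfolding Ploc_def Qloc_def by auto

lemma card_Ploc: "card (Ploc p q) = 2 * q * p + q"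
proof -
  have d: "{0..<p} \<times> {p..<p+2*q} \<inter> (\<lambda>j. (p+j, p+q+j)) ` {0..<q} = {}" by auto
  have "card (Ploc p q) = card ({0..<p} \<times> {p..<p+2*q}) + card ((\<lambda>j. (p+j, p+q+j)) ` {0..<q})"
    unfolding Ploc_def by (rule card_Un_disjoint) (use d in auto)
  also have "card ((\<lambda>j. (p+j, p+q+j)) ` {0..<q}) = q"
    by (subst card_image) (auto simp: inj_on_def)
  finally show ?thesis by (simp add: card_cartesian_product)
qed

lemma card_Qloc: "card (Qloc p q) = q * p"
  unfolding Qloc_def by (simp add: card_cartesian_product)

lemma inblk_P: "inblk p q (\<lambda>i. Ploc (p i) (q i))"
  unfolding inblk_def Ploc_def bsize_def by auto

lemma inblk_Q: "inblk p q (\<lambda>i. Qloc (p i) (q i))"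
  unfolding inblk_def Qloc_def bsize_def by auto



abbreviation "Pn n p q \<equiv> Blk n p q (\<lambda>i. Ploc (p i) (q i))"
abbreviation "Qn n p q \<equiv> Blk n p q (\<lambda>i. Qloc (p i) (q i))"

lemma Nsize_boff: "Nsize n p q = boff p q n"
  by (simp add: Nsize_def boff_def)

lemma blockdiag_eval:
  assumes i: "i < n" "boff p q i \<le> r" "r < boff p q i + bsize p q i"
  shows "blockdiag n p q Hs r c = (if boff p q i \<le> c \<and> c < boff p q i + bsize p q i
                                   then Hs i (r - boff p q i) (c - boff p q i) else 0)"
proof -
  let ?t = "\<lambda>j. if boff p q j \<le> r \<and> r < boff p q j + bsize p q j
               \<and> boff p q j \<le> c \<and> c < boff p q j + bsize p q j
            then Hs j (r - boff p q j) (c - boff p q j) else 0"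
  have "blockdiag n p q Hs r c = (\<Sum>j<n. ?t j)" by (simp add: blockdiag_def)
  also have "\<dots> = ?t i + (\<Sum>j\<in>{..<n} - {i}. ?t j)" using i(1) by (simp add: sum.remove)
  also have "(\<Sum>j\<in>{..<n} - {i}. ?t j) = 0"
  proof (rule sum.neutral, rule ballI)
    fix j assume "j \<in> {..<n} - {i}"
    then have "\<not> (boff p q j \<le> r \<and> r < boff p q j + bsize p q j)"
      using block_unique[of p q i r j] i by blast
    then show "?t j = 0" by auto
  qed
  finally show ?thesis using i by simp
qed

lemma Hmat_nonP:
  assumes "r' < p + 2*q" "c' < p + 2*q" "(r', c') \<notin> Ploc p q" "diag_mat q C"
  shows "Hmat q p A B C r' c' = (if r' = c' then 1 else 0)"
proof (cases "r' = c'")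
  case True then show ?thesis using assms by (simp add: Hmat_def)
next
  case False
  have nA: "\<not> (r' < p \<and> p \<le> c' \<and> c' < p + q)" using assms(2,3) unfolding Ploc_def by auto
  have nB: "\<not> (r' < p \<and> p + q \<le> c' \<and> c' < p + 2*q)" using assms(2,3) unfolding Ploc_def by auto
  show ?thesis
  proof (cases "p \<le> r' \<and> r' < p + q \<and> p + q \<le> c' \<and> c' < p + 2*q")
    case True
    have "r' - p \<noteq> c' - p - q"
    proof
      assume e: "r' - p = c' - p - q"
      have "(r', c') = (p + (r' - p), p + q + (r' - p))" using True e by auto
      moreover have "r' - p \<in> {0..<q}" using True by auto
      ultimately have "(r', c') \<in> Ploc p q" unfolding Ploc_def by blast
      then show False using assms(3) by simp
    qed
    then have "C (r' - p) (c' - p - q) = 0" using assms(4) True unfolding diag_mat_def by auto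
    then show ?thesis using False nA nB True by (simp add: Hmat_def)
  next
    case F2: False
    then show ?thesis unfolding Hmat_def using False nA nB by auto
  qed
qed

lemma Pn_sub: "(r, c) \<in> Pn n p q \<Longrightarrow> r < Nsize n p q \<and> c < Nsize n p q"
proof -
  assume "(r, c) \<in> Pn n p q"
  then obtain i where i: "i < n" "boff p q i \<le> r" "boff p q i \<le> c"
    "(r - boff p q i, c - boff p q i) \<in> Ploc (p i) (q i)" unfolding Blk_mem by blast
  have "r - boff p q i < bsize p q i" "c - boff p q i < bsize p q i"
    using inblk_P[of p q] i(4) unfolding inblk_def by blast+
  moreover have "boff p q i + bsize p q i \<le> boff p q n" using boff_lt[OF i(1)] .
  ultimately show ?thesis using i unfolding Nsize_boff by arith
qed

lemma Wnat_delta: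
  assumes M: "M \<in> W_nat n p q" and rc: "r < Nsize n p q" "c < Nsize n p q" "(r, c) \<notin> Pn n p q"
  shows "M r c = (if r = c then 1 else 0)"
proof -
  obtain A B C where M: "M = blockdiag n p q (\<lambda>i. Hmat (q i) (p i) (A i) (B i) (C i))"
    and dC: "\<forall>i<n. diag_mat (q i) (C i)" using assms(1) unfolding W_nat_def by blast
  obtain i where i: "i < n" "boff p q i \<le> r" "r < boff p q i + bsize p q i"
    using block_exists[of r p q n] rc(1) by (auto simp: Nsize_boff)
  show ?thesis
  proof (cases "boff p q i \<le> c \<and> c < boff p q i + bsize p q i")
    case True
    have nP: "(r - boff p q i, c - boff p q i) \<notin> Ploc (p i) (q i)"
      using rc(3) i True unfolding Blk_mem by blast
    have "M r c = Hmat (q i) (p i) (A i) (B i) (C i) (r - boff p q i) (c - boff p q i)"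
      unfolding M blockdiag_eval[OF i] using True by simp
    also have "\<dots> = (if r - boff p q i = c - boff p q i then 1 else 0)"
      by (rule Hmat_nonP) (use i True nP dC in \<open>auto simp: bsize_def\<close>)
    finally show ?thesis using i True by auto
  next
    case False
    then have "M r c = 0" unfolding M blockdiag_eval[OF i] by auto
    moreover have "r \<noteq> c" using False i by auto
    ultimately show ?thesis by simp
  qed
qed

lemma to_mat_e:
  assumes e: "bij_betw e {0..<N} (UNIV :: 'N::finite set)" and "r < N" "c < N"
  shows "(to_mat N e M :: real^'N^'N) $ e r $ e c = M r c"
proof -
  have inj: "inj_on e {0..<N}" using e by (rule bij_betw_imp_inj_on)
  show ?thesis unfolding to_mat_def using the_inv_into_f_f[OF inj] assms(2,3) by simp
qed

lemma e_surj:
  assumes e: "bij_betw e {0..<N} (UNIV :: 'N::finite set)"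
  obtains r where "r < N" "a = e r"
  using e unfolding bij_betw_def by (metis atLeastLessThan_iff imageE UNIV_I)

lemma W_surj:
  assumes e: "bij_betw e {0..<Nsize n p q} (UNIV :: 'N::finite set)"
    and qpos: "\<forall>i<n. q i > 0"
    and Y: "\<And>r c. r < Nsize n p q \<Longrightarrow> c < Nsize n p q \<Longrightarrow> (r, c) \<notin> Pn n p q \<Longrightarrow>
               (Y :: real^'N^'N) $ e r $ e c = (if r = c then 1 else 0)"
  shows "Y \<in> Wgrp n p q e"
proof -
  define N where "N = Nsize n p q"
  define A where "A i j k = Y $ e (boff p q i + j) $ e (boff p q i + p i + k)" for i j k
  define B where "B i j k = Y $ e (boff p q i + j) $ e (boff p q i + p i + q i + k)" for i j k
  define C where "C i j k = (if j = k then Y $ e (boff p q i + p i + j) $ e (boff p q i + p i + q i + j) else 0)" for i j k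
  define M where "M = blockdiag n p q (\<lambda>i. Hmat (q i) (p i) (A i) (B i) (C i))"
  have dC: "\<forall>i<n. diag_mat (q i) (C i)" unfolding diag_mat_def C_def by auto
  have MW: "M \<in> W_nat n p q" unfolding W_nat_def M_def using dC by blast
  have "Y $ e r $ e c = M r c" if rc: "r < N" "c < N" for r c
  proof (cases "(r, c) \<in> Pn n p q")
    case True
    then obtain i where i: "i < n" "boff p q i \<le> r" "boff p q i \<le> c"
      and loc: "(r - boff p q i, c - boff p q i) \<in> Ploc (p i) (q i)" unfolding Blk_mem by blast
    define r1 where "r1 = r - boff p q i"
    define c1 where "c1 = c - boff p q i"
    have b: "r1 < bsize p q i" "c1 < bsize p q i"
      using inblk_P[of p q] loc unfolding inblk_def r1_def c1_def by blast+
    have ir: "boff p q i \<le> r" "r < boff p q i + bsize p q i" using i b by (auto simp: r1_def)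
    have Mrc: "M r c = Hmat (q i) (p i) (A i) (B i) (C i) r1 c1"
      unfolding M_def blockdiag_eval[OF i(1) ir] r1_def c1_def using i b c1_def by auto
    have qi: "q i > 0" using qpos i(1) by simp
    have rr: "r = boff p q i + r1" and cc: "c = boff p q i + c1" using i by (auto simp: r1_def c1_def)
    from loc have "(r1 < p i \<and> p i \<le> c1 \<and> c1 < p i + 2 * q i) \<or> (\<exists>j<q i. r1 = p i + j \<and> c1 = p i + q i + j)"
      unfolding Ploc_def r1_def[symmetric] c1_def[symmetric] by auto
    then show ?thesis
    proof (elim disjE exE conjE)
      assume h: "r1 < p i" "p i \<le> c1" "c1 < p i + 2 * q i"
      show ?thesis
      proof (cases "c1 < p i + q i")
        case True
        have "Hmat (q i) (p i) (A i) (B i) (C i) r1 c1 = A i r1 (c1 - p i)"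
          using h True by (simp add: Hmat_def)
        then have "M r c = Y $ e r $ e c" using h unfolding Mrc by (simp add: A_def rr cc)
        then show ?thesis by simp
      next
        case False
        have "Hmat (q i) (p i) (A i) (B i) (C i) r1 c1 = B i r1 (c1 - p i - q i)"
          using h False by (simp add: Hmat_def)
        then have "M r c = Y $ e r $ e c" using h False unfolding Mrc by (simp add: B_def rr cc)
        then show ?thesis by simp
      qed
    next
      fix j assume j: "j < q i" "r1 = p i + j" "c1 = p i + q i + j"
      have "Hmat (q i) (p i) (A i) (B i) (C i) r1 c1 = C i (r1 - p i) (c1 - p i - q i)"
        using j qi by (simp add: Hmat_def)
      also have "\<dots> = Y $ e (boff p q i + p i + j) $ e (boff p q i + p i + q i + j)"
        using j by (simp add: C_def)
      finally have "M r c = Y $ e r $ e c" using j unfolding Mrc by (simp add: rr cc add.assoc)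
      then show ?thesis by simp
    qed
  next
    case False
    then show ?thesis using Y[OF rc[unfolded N_def] False] Wnat_delta[OF MW rc[unfolded N_def] False] by simp
  qed
  then have "Y = to_mat N e M"
    unfolding vec_eq_iff
  proof (intro allI)
    fix a b
    assume h: "\<And>r c. r < N \<Longrightarrow> c < N \<Longrightarrow> Y $ e r $ e c = M r c"
    obtain r where r: "r < N" "a = e r" using e_surj[OF e[folded N_def]] by blast
    obtain c where c: "c < N" "b = e c" using e_surj[OF e[folded N_def]] by blast
    show "Y $ a $ b = to_mat N e M $ a $ b"
      using h[OF r(1) c(1)] to_mat_e[OF e[folded N_def] r(1) c(1)] r c by simp
  qed
  then show ?thesis unfolding Wgrp_def N_def using MW by blast
qed



lemma img_comp:
  assumes inj: "inj_on e D" and R: "R \<subseteq> D \<times> D" and S: "S \<subseteq> D \<times> D"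
  shows "(\<lambda>(r,c). (e r, e c)) ` R O (\<lambda>(r,c). (e r, e c)) ` S = (\<lambda>(r,c). (e r, e c)) ` (R O S)"
proof (rule set_eqI, rule iffI)
  fix x assume "x \<in> (\<lambda>(r,c). (e r, e c)) ` R O (\<lambda>(r,c). (e r, e c)) ` S"
  then obtain r k1 k2 c where x: "x = (e r, e c)" and rk: "(r,k1) \<in> R" and kc: "(k2,c) \<in> S"
    and ek: "e k1 = e k2" by (auto elim!: relcompE)
  have "k1 \<in> D" "k2 \<in> D" using rk kc R S by auto
  then have "k1 = k2" using inj ek unfolding inj_on_def by blast
  then show "x \<in> (\<lambda>(r,c). (e r, e c)) ` (R O S)" using x rk kc by auto
next
  fix x assume "x \<in> (\<lambda>(r,c). (e r, e c)) ` (R O S)"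
  then obtain r k c where x: "x = (e r, e c)" and rk: "(r,k) \<in> R" and kc: "(k,c) \<in> S" by auto
  have "(e r, e k) \<in> (\<lambda>(r,c). (e r, e c)) ` R" using rk by force
  moreover have "(e k, e c) \<in> (\<lambda>(r,c). (e r, e c)) ` S" using kc by force
  ultimately show "x \<in> (\<lambda>(r,c). (e r, e c)) ` R O (\<lambda>(r,c). (e r, e c)) ` S" using x by blast
qed

lemma img_mem:
  assumes inj: "inj_on e D" and R: "R \<subseteq> D \<times> D" and "r \<in> D" "c \<in> D"
  shows "(e r, e c) \<in> (\<lambda>(r,c). (e r, e c)) ` R \<longleftrightarrow> (r, c) \<in> R"
proof
  assume "(e r, e c) \<in> (\<lambda>(r,c). (e r, e c)) ` R"
  then obtain r' c' where "(r',c') \<in> R" "e r = e r'" "e c = e c'" by auto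
  moreover then have "r' \<in> D" "c' \<in> D" using R by auto
  ultimately show "(r, c) \<in> R" using inj assms(3,4) unfolding inj_on_def by metis
qed force

theorem mainTheorem4:
  fixes n :: nat and p q :: "nat \<Rightarrow> nat" and e :: "nat \<Rightarrow> 'N::finite"
  assumes "n \<ge> 1"
    and "\<forall>i<n. q i > 0"
    and "even (\<Sum>i<n. q i)"
    and "bij_betw e {0..<Nsize n p q} (UNIV :: 'N set)"
  shows "dim (lie_alg (Wgrp n p q e)) = (\<Sum>i<n. 2 * q i * p i + q i)
       \<and> even (dim (lie_alg (Wgrp n p q e)))
       \<and> dim (commutator_ideal (lie_alg (Wgrp n p q e))) = (\<Sum>i<n. q i * p i)
       \<and> dim (lie_alg (Wgrp n p q e)) \<ge> 2 * dim (commutator_ideal (lie_alg (Wgrp n p q e))) + 2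
       \<and> type_T (Wgrp n p q e)"
proof -
  define N where "N = Nsize n p q"
  define D where "D = {0..<N}"
  define \<phi> where "\<phi> = (\<lambda>(r::nat,c::nat). (e r, e c))"
  define P' where "P' = \<phi> ` Pn n p q"
  have bij: "bij_betw e D (UNIV :: 'N set)" using assms(4) unfolding D_def N_def .
  have inj: "inj_on e D" using bij by (rule bij_betw_imp_inj_on)
  have PD: "Pn n p q \<subseteq> D \<times> D" using Pn_sub unfolding D_def N_def by fastforce
  have PP: "Pn n p q O Pn n p q = Qn n p q"
    using Blk_comp[OF inblk_P inblk_P, of n] Ploc_comp by simp
  have PQ: "Pn n p q O Qn n p q = {}"
    using Blk_comp[OF inblk_P inblk_Q, of n] Ploc_Qloc Blk_empty by simp
  have QP: "Qn n p q \<subseteq> Pn n p q" by (rule Blk_mono[OF Qloc_sub])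
  have QD: "Qn n p q \<subseteq> D \<times> D" using QP PD by blast
  have P'P': "P' O P' = \<phi> ` Qn n p q"
    unfolding P'_def \<phi>_def img_comp[OF inj PD PD] PP ..
  have P'3: "P' O P' O P' = {}"
    unfolding P'P' unfolding P'_def \<phi>_def img_comp[OF inj PD QD] PQ by simp
  interpret nilp P'
  proof
    show "P' O P' \<subseteq> P'" using P'P' image_mono[OF QP, of \<phi>] unfolding P'_def by simp
    show "P' O P' O P' = {}" by (rule P'3)
  qed
  have W: "Wgrp n p q e = grp"
  proof
    show "Wgrp n p q e \<subseteq> grp"
    proof
      fix Y assume "Y \<in> Wgrp n p q e"
      then obtain M where Y: "Y = to_mat N e M" and M: "M \<in> W_nat n p q"
        unfolding Wgrp_def N_def by blast
      show "Y \<in> grp" unfolding grp_def supp_def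
      proof (intro CollectI allI impI)
        fix a b assume ab: "(a, b) \<notin> P'"
        obtain r where r: "r < N" "a = e r" using e_surj[OF bij[unfolded D_def]] by blast
        obtain c where c: "c < N" "b = e c" using e_surj[OF bij[unfolded D_def]] by blast
        have rc: "(r, c) \<notin> Pn n p q" using ab r c unfolding P'_def \<phi>_def by force
        have "Y $ a $ b = (if r = c then 1 else 0)"
          unfolding Y r c to_mat_e[OF bij[unfolded D_def] r(1) c(1)]
          using Wnat_delta[OF M r(1)[unfolded N_def] c(1)[unfolded N_def] rc] .
        moreover have "(e r = e c) = (r = c)" using inj r c unfolding inj_on_def D_def by auto
        ultimately show "(Y - mat 1) $ a $ b = 0" using r c by (simp add: mat_def)
      qed
    qed
    show "grp \<subseteq> Wgrp n p q e"
    proof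
      fix Y assume Y: "Y \<in> grp"
      show "Y \<in> Wgrp n p q e"
      proof (rule W_surj[OF assms(4) assms(2)])
        fix r c assume r: "r < Nsize n p q" and c: "c < Nsize n p q" and rc: "(r, c) \<notin> Pn n p q"
        have rD: "r \<in> D" and cD: "c \<in> D" using r c unfolding D_def N_def by auto
        have "(e r, e c) \<notin> P'" unfolding P'_def \<phi>_def using img_mem[OF inj PD rD cD] rc by simp
        then have "(Y - mat 1) $ e r $ e c = 0" using Y unfolding grp_def supp_def by blast
        moreover have "(e r = e c) = (r = c)" using inj rD cD unfolding inj_on_def by auto
        ultimately show "Y $ e r $ e c = (if r = c then 1 else 0)" by (simp add: mat_def)
      qed
    qed
  qed
  have inj\<phi>: "inj_on \<phi> (D \<times> D)" using inj unfolding \<phi>_def inj_on_def by auto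
  have cP: "card P' = (\<Sum>i<n. 2 * q i * p i + q i)"
  proof -
    have "card P' = card (Pn n p q)" unfolding P'_def by (rule card_image[OF inj_on_subset[OF inj\<phi> PD]])
    also have "\<dots> = (\<Sum>i<n. card (Ploc (p i) (q i)))"
      by (rule card_Blk[OF inblk_P]) (simp add: Ploc_def)
    finally show ?thesis by (simp add: card_Ploc)
  qed
  have cQ: "card (P' O P') = (\<Sum>i<n. q i * p i)"
  proof -
    have "card (P' O P') = card (Qn n p q)" unfolding P'P' by (rule card_image[OF inj_on_subset[OF inj\<phi> QD]])
    also have "\<dots> = (\<Sum>i<n. card (Qloc (p i) (q i)))"
      by (rule card_Blk[OF inblk_Q]) (simp add: Qloc_def)
    finally show ?thesis by (simp add: card_Qloc)
  qed
  have d1: "dim (lie_alg (Wgrp n p q e)) = (\<Sum>i<n. 2 * q i * p i + q i)"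
    unfolding W lie_alg_grp dim_supp cP ..
  have d2: "dim (commutator_ideal (lie_alg (Wgrp n p q e))) = (\<Sum>i<n. q i * p i)"
    unfolding W lie_alg_grp comm_ideal dim_supp cQ ..
  have split: "(\<Sum>i<n. 2 * q i * p i + q i) = 2 * (\<Sum>i<n. q i * p i) + (\<Sum>i<n. q i)"
    by (simp add: sum.distrib sum_distrib_left mult.assoc)
  have "q 0 > 0" using assms(1,2) by simp
  moreover have "q 0 \<le> (\<Sum>i<n. q i)" using assms(1) by (intro member_le_sum) auto
  ultimately have qpos: "(\<Sum>i<n. q i) > 0" by linarith
  then have q2: "(\<Sum>i<n. q i) \<ge> 2" using assms(3) by (metis One_nat_def Suc_1 Suc_leI le_antisym not_less odd_one)
  have tT: "type_T grp"
    by (rule typeT) (simp add: cP cQ split qpos)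
  show ?thesis using d1 d2 split assms(3) q2 tT W by simp
qed


end
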